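(* Let $r\ge1$ and let $x_1,\ldots,x_r,y_1,\ldots,y_r$ be positive integers which are the parameters of a balanced lobster, i.e. they satisfy, for all $i=1,\ldots,r$: $x_i=y_{r-\frac{i-1}{2}}$ and $y_i=x_{r-\frac{i-1}{2}}$ when $i$ is odd, and $x_i=x_{i/2}$ and $y_i=y_{i/2}$ when $i$ is even. Let $i$ be an odd integer and $j$ an even integer with $1\le i,j\le r$. Then (i) $\sum_{t=\frac{i+1}{2}}^{i}x_t=\sum_{t=r-\frac{i-1}{2}}^{r}y_t$; (ii) $\sum_{t=\frac{i+1}{2}}^{i}y_t=\sum_{t=r-\frac{i-1}{2}}^{r}x_t$; (iii) $\sum_{t=\frac{j}{2}+1}^{j}x_t=\sum_{t=r-\frac{j}{2}+1}^{r}y_t$; (iv) $\sum_{t=\frac{j}{2}+1}^{j}y_t=\sum_{t=r-\frac{j}{2}+1}^{r}x_t$.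
   Context: The lobster in question consists of adjacent vertices $v_1,v_2$; $v_1$ is adjacent to $s_1\ge0$ leaves and to vertices $u_{11},\ldots,u_{1r}$, where $u_{1i}$ is adjacent to $x_i\ge1$ further leaves; $v_2$ is adjacent to $s_2\ge0$ leaves and to vertices $u_{21},\ldots,u_{2r}$, where $u_{2j}$ is adjacent to $y_j\ge1$ further leaves. It is called balanced when the displayed relations between the $x_i$ and $y_i$ hold. *)

theory Defs
  imports Main
begin

text \<open>Parameters x_1..x_r, y_1..y_r of the lobster, represented as functions on nat
  (only indices 1..r matter). Balancedness condition from the paper.\<close>

definition balanced_lobster :: "nat \<Rightarrow> (nat \<Rightarrow> nat) \<Rightarrow> (nat \<Rightarrow> nat) \<Rightarrow> bool" where
  "balanced_lobster r x y \<longleftrightarrow>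
     (\<forall>i\<in>{1..r}. (odd i \<longrightarrow> x i = y (r - (i - 1) div 2) \<and> y i = x (r - (i - 1) div 2)) \<and>
                  (even i \<longrightarrow> x i = x (i div 2) \<and> y i = y (i div 2)))"

end

theory Submission
  imports Defs
begin

lemma key:
  fixes r :: nat and x y :: "nat \<Rightarrow> nat"
  assumes H: "\<forall>i\<in>{1..r}. (odd i \<longrightarrow> x i = y (r - (i - 1) div 2)) \<and> (even i \<longrightarrow> x i = x (i div 2))"
  shows "1 \<le> n \<Longrightarrow> n \<le> r \<Longrightarrow> (\<Sum>t = n div 2 + 1..n. x t) = (\<Sum>t = r - (n - 1) div 2..r. y t)"
proof (induction n)
  case 0 then show ?case by simp
next
  case (Suc n)
  show ?case
  proof (cases "n = 0")
    case True
    then show ?thesis using H Suc.prems by auto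
  next
    case False
    hence IH: "(\<Sum>t = n div 2 + 1..n. x t) = (\<Sum>t = r - (n - 1) div 2..r. y t)"
      using Suc by auto
    show ?thesis
    proof (cases "even n")
      case True
      then obtain m where m: "n = 2*m" by blast
      with False have m1: "m \<ge> 1" by simp
      have xv: "x (2*m+1) = y (r - m)" using H Suc.prems m by auto
      have L: "(\<Sum>t = Suc n div 2 + 1..Suc n. x t) = (\<Sum>t = n div 2 + 1..n. x t) + x (Suc n)"
        using m by (simp add: sum.cl_ivl_Suc)
      have R: "(\<Sum>t = r - (Suc n - 1) div 2..r. y t) = y (r - m) + (\<Sum>t = Suc (r - m)..r. y t)"
        using m by (simp add: sum.atLeast_Suc_atMost)
      have e: "Suc (r - m) = r - (n - 1) div 2" using m m1 Suc.prems by auto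
      show ?thesis using L R e IH xv m by simp
    next
      case False
      then obtain m where m: "n = 2*m+1" using oddE by blast
      with \<open>n \<noteq> 0\<close> Suc.prems have m1: "2*m+2 \<le> r" by simp
      have "2*m+2 \<in> {1..r}" using m1 by simp
      hence "x (2*m+2) = x ((2*m+2) div 2)" using H by simp
      hence xv: "x (2*m+2) = x (m+1)" by simp
      have A: "(\<Sum>t = m+1..2*m+1. x t) = x (m+1) + (\<Sum>t = m+2..2*m+1. x t)"
        by (simp add: sum.atLeast_Suc_atMost)
      have B: "(\<Sum>t = m+2..2*m+2. x t) = (\<Sum>t = m+2..2*m+1. x t) + x (2*m+2)"
        by (simp add: sum.cl_ivl_Suc)
      have q1: "Suc n div 2 + 1 = m+2" "Suc n = 2*m+2" using m by simp_all
      have "(\<Sum>t = Suc n div 2 + 1..Suc n. x t) = (\<Sum>t = m+2..2*m+2. x t)"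
        by (simp only: q1(1), simp only: q1(2))
      moreover have "(\<Sum>t = n div 2 + 1..n. x t) = (\<Sum>t = m+1..2*m+1. x t)" using m by simp
      moreover have "(Suc n - 1) div 2 = (n - 1) div 2" using m by simp
      ultimately show ?thesis using A B IH xv by simp
    qed
  qed
qed

theorem lemma4p8:
  fixes r :: nat and x y :: "nat \<Rightarrow> nat" and i j :: nat
  assumes "r \<ge> 1"
    and "\<forall>t\<in>{1..r}. x t \<ge> 1 \<and> y t \<ge> 1"
    and "balanced_lobster r x y"
    and "odd i" and "1 \<le> i" and "i \<le> r"
    and "even j" and "1 \<le> j" and "j \<le> r"
  shows "(\<Sum>t = (i + 1) div 2..i. x t) = (\<Sum>t = r - (i - 1) div 2..r. y t) \<and>
         (\<Sum>t = (i + 1) div 2..i. y t) = (\<Sum>t = r - (i - 1) div 2..r. x t) \<and>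
         (\<Sum>t = j div 2 + 1..j. x t) = (\<Sum>t = r - j div 2 + 1..r. y t) \<and>
         (\<Sum>t = j div 2 + 1..j. y t) = (\<Sum>t = r - j div 2 + 1..r. x t)"
proof -
  have H1: "\<forall>i\<in>{1..r}. (odd i \<longrightarrow> x i = y (r - (i - 1) div 2)) \<and> (even i \<longrightarrow> x i = x (i div 2))"
    using assms(3) unfolding balanced_lobster_def by blast
  have H2: "\<forall>i\<in>{1..r}. (odd i \<longrightarrow> y i = x (r - (i - 1) div 2)) \<and> (even i \<longrightarrow> y i = y (i div 2))"
    using assms(3) unfolding balanced_lobster_def by blast
  have ei: "(i + 1) div 2 = i div 2 + 1" using assms(4) by presburger
  have ej: "r - (j - 1) div 2 = r - j div 2 + 1" using assms(7,8,9) by presburger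
  show ?thesis
    using key[OF H1, of i] key[OF H2, of i] key[OF H1, of j] key[OF H2, of j] assms ei ej
    by simp
qed

end
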